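(* Let $q$ be a positive multiple of $24$. Then for every $m\in\mathbb{Z}$ with $q\nmid 24m$, one has $|\widehat{f_q}(-m)|\le\frac1{\sqrt5}$.
   Context: $e(\theta):=e^{2\pi i\theta}$. For $f:\mathbb{Z}/q\mathbb{Z}\to\mathbb{C}$, $\widehat f(r):=\frac1q\sum_{x\in\mathbb{Z}/q\mathbb{Z}}f(x)e(-rx/q)$, and $f_q(t):=\#\{x\in\mathbb{Z}/q\mathbb{Z}:x^2=t\}$. *)

theory Defs
  imports "HOL-Analysis.Analysis"
begin

definition e :: "real \<Rightarrow> complex" where
  "e \<theta> = exp (2 * pi * \<i> * complex_of_real \<theta>)"

text \<open>A function on Z/qZ is represented as a function on int (only its values on the
  residues 0..q-1 matter). Fourier transform:
  hat f (r) = 1/q * sum over x in Z/qZ of f(x) e(-r x / q).\<close>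
definition fhat :: "int \<Rightarrow> (int \<Rightarrow> complex) \<Rightarrow> int \<Rightarrow> complex" where
  "fhat q f r = (1 / of_int q) * (\<Sum>x\<in>{0..<q}. f x * e (- of_int r * of_int x / of_int q))"

definition fq :: "int \<Rightarrow> int \<Rightarrow> complex" where
  "fq q t = of_nat (card {x \<in> {0..<q}. x ^ 2 mod q = t mod q})"

end

theory Submission imports Defs begin

lemma e_add: "e (a + b) = e a * e b"
  unfolding e_def by (simp add: distrib_left exp_add[symmetric])

lemma e_int: "e (of_int n) = 1"
  unfolding e_def using exp_integer_2pi[of "of_int n"]
  by (simp add: mult.commute mult.left_commute)

lemma e_norm: "norm (e t) = 1"
  unfolding e_def by (simp add: norm_exp)

lemma e_cnj: "cnj (e t) = e (- t)"
  unfolding e_def by (subst exp_cnj) simp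

lemma e_cong:
  assumes "a mod q = b mod q" "q \<noteq> 0"
  shows "e (of_int a / of_int q) = e (of_int b / of_int q)"
proof -
  have "a = b + q * ((a - b) div q)"
    using assms by (metis add.commute diff_add_cancel dvd_mult_div_cancel mod_eq_dvd_iff)
  hence "of_int a / of_int q = (of_int b / of_int q :: real) + of_int ((a - b) div q)"
    using assms(2) by (metis (no_types, lifting) add_divide_distrib nonzero_mult_div_cancel_left of_int_add of_int_eq_0_iff of_int_mult)
  thus ?thesis by (simp add: e_add e_int)
qed

lemma e_pow: "e (of_nat n * t) = e t ^ n"
  unfolding e_def by (simp add: exp_of_nat_mult[symmetric] algebra_simps)

lemma e_eq_1: assumes "e t = 1" shows "t \<in> \<int>"
proof -
  from assms obtain n :: int where "Im (2 * pi * \<i> * complex_of_real t) = of_int (2*n) * pi"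
    unfolding e_def exp_eq_1 by blast
  hence "t = of_int n" by simp
  thus ?thesis by simp
qed

lemma geom_zero:
  fixes q c :: int
  assumes "q > 0" "\<not> q dvd c"
  shows "(\<Sum>y\<in>{0..<q}. e (of_int (c * y) / of_int q)) = 0"
proof -
  define z where "z = e (of_int c / of_int q)"
  have "{0..<q} = int ` {..<nat q}"
    using assms(1) by (simp add: image_int_atLeastLessThan lessThan_atLeast0)
  hence "(\<Sum>y\<in>{0..<q}. e (of_int (c * y) / of_int q)) = (\<Sum>n<nat q. e (of_int (c * int n) / of_int q))"
    by (simp add: sum.reindex)
  also have "\<dots> = (\<Sum>n<nat q. z ^ n)"
  proof (rule sum.cong)
    fix n assume "n \<in> {..<nat q}"
    have "of_int (c * int n) / of_int q = of_nat n * (of_int c / of_int q :: real)" by simp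
    thus "e (of_int (c * int n) / of_int q) = z ^ n" unfolding z_def by (metis e_pow)
  qed simp
  also have "z \<noteq> 1"
  proof
    assume "z = 1"
    then have "of_int c / of_int q \<in> (\<int> :: real set)" unfolding z_def by (rule e_eq_1)
    then obtain k where k: "of_int c / of_int q = (of_int k :: real)" by (auto elim: Ints_cases)
    hence "of_int c = (of_int (q * k) :: real)" using assms(1) by (simp add: field_simps)
    hence "c = q * k" by linarith
    thus False using assms(2) by simp
  qed
  moreover have "z ^ nat q = 1"
  proof -
    have "z ^ nat q = e (of_nat (nat q) * (of_int c / of_int q))" unfolding z_def by (metis e_pow)
    also have "of_nat (nat q) * (of_int c / of_int q) = (of_int c :: real)" using assms(1) by simp
    finally show ?thesis by (simp add: e_int)
  qed
  ultimately show ?thesis by (simp add: sum_gp_strict)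
qed

lemma card_D:
  fixes q m :: int
  assumes "q > 0"
  shows "card {h\<in>{0..<q}. q dvd 2*m*h} \<le> nat (gcd (2*m) q)"
proof -
  define g where "g = gcd (2*m) q"
  define k where "k = q div g"
  have gpos: "g > 0" using assms unfolding g_def by simp
  have qgk: "q = g * k" unfolding k_def g_def by simp
  obtain c where c: "2*m = g * c" unfolding g_def by (meson gcd_dvd1 dvdE)
  have cop: "coprime k c"
    using div_gcd_coprime[of "2*m" q] assms c gpos unfolding k_def g_def
    by (metis coprime_commute gcd_pos_int less_irrefl nonzero_mult_div_cancel_left)
  have "{h\<in>{0..<q}. q dvd 2*m*h} \<subseteq> (\<lambda>j. k * j) ` {0..<g}"
  proof
    fix h assume h: "h \<in> {h\<in>{0..<q}. q dvd 2*m*h}"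
    hence "g * k dvd g * (c * h)" using qgk c by (simp add: mult.assoc)
    hence "k dvd c * h" using gpos by simp
    hence "k dvd h" using cop by (simp add: coprime_dvd_mult_right_iff)
    then obtain j where j: "h = k * j" by blast
    have kpos: "k > 0" using qgk assms gpos by (simp add: zero_less_mult_iff)
    have "0 \<le> j" using h j kpos by (simp add: zero_le_mult_iff)
    moreover have "j < g" using h j kpos qgk by (simp add: mult.commute)
    ultimately show "h \<in> (\<lambda>j. k * j) ` {0..<g}" using j by auto
  qed
  hence "card {h\<in>{0..<q}. q dvd 2*m*h} \<le> card ((\<lambda>j. k * j) ` {0..<g})"
    by (intro card_mono) auto
  also have "\<dots> \<le> card {0..<g}" by (rule card_image_le) simp
  finally show ?thesis unfolding g_def by simp
qed

lemma five_g:
  fixes q m :: int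
  assumes "q > 0" "\<not> q dvd 24 * m"
  shows "5 * gcd (2*m) q \<le> q"
proof (rule ccontr)
  assume neg: "\<not> ?thesis"
  define g where "g = gcd (2*m) q"
  define k where "k = q div g"
  have gpos: "g > 0" using assms unfolding g_def by simp
  have qgk: "q = g * k" unfolding k_def g_def by simp
  obtain c where c: "2*m = g * c" unfolding g_def by (meson gcd_dvd1 dvdE)
  have kpos: "k > 0" using qgk assms gpos by (simp add: zero_less_mult_iff)
  have "k < 5" using neg qgk gpos unfolding g_def[symmetric]
    by (metis mult.commute mult_le_cancel_left_pos not_le)
  hence "k = 1 \<or> k = 2 \<or> k = 3 \<or> k = 4" using kpos by linarith
  hence "k dvd 12" by (elim disjE) simp_all
  then obtain r where r: "12 = k * r" by blast
  have "24 * m = 12 * (2 * m)" by simp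
  also have "\<dots> = (k * r) * (g * c)" using r c by simp
  also have "\<dots> = q * (r * c)" using qgk by (simp add: ac_simps)
  finally have "24 * m = q * (r * c)" .
  thus False using assms(2) by simp
qed

lemma shift_bij:
  fixes q y :: int assumes "q > 0"
  shows "bij_betw (\<lambda>h. (y + h) mod q) {0..<q} {0..<q}"
proof (rule bij_betw_imageI)
  show "inj_on (\<lambda>h. (y + h) mod q) {0..<q}"
  proof (rule inj_onI)
    fix a b assume ab: "a \<in> {0..<q}" "b \<in> {0..<q}" "(y + a) mod q = (y + b) mod q"
    have "a mod q = ((y + a) mod q - y) mod q" by (simp add: mod_diff_left_eq)
    also have "\<dots> = ((y + b) mod q - y) mod q" using ab by simp
    also have "\<dots> = b mod q" by (simp add: mod_diff_left_eq)
    finally show "a = b" using ab by simp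
  qed
  show "(\<lambda>h. (y + h) mod q) ` {0..<q} = {0..<q}"
  proof
    show "(\<lambda>h. (y + h) mod q) ` {0..<q} \<subseteq> {0..<q}" using assms by auto
    show "{0..<q} \<subseteq> (\<lambda>h. (y + h) mod q) ` {0..<q}"
    proof
      fix x assume x: "x \<in> {0..<q}"
      have "(y + (x - y) mod q) mod q = x" using x by (simp add: mod_add_right_eq)
      moreover have "(x - y) mod q \<in> {0..<q}" using assms by simp
      ultimately show "x \<in> (\<lambda>h. (y + h) mod q) ` {0..<q}" by (metis image_eqI)
    qed
  qed
qed

lemma shift_term:
  fixes q m y h :: int assumes "q > 0"
  shows "e (of_int (m * (((y + h) mod q)^2 - y^2)) / of_int q) =
         e (of_int (m * h^2) / of_int q) * e (of_int (2*m*h*y) / of_int q)"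
proof -
  have 1: "((y + h) mod q)^2 mod q = (y+h)^2 mod q" by (rule power_mod)
  have 2: "(((y + h) mod q)^2 - y^2) mod q = ((y+h)^2 - y^2) mod q" by (metis 1 mod_diff_left_eq)
  have "(m * (((y + h) mod q)^2 - y^2)) mod q = (m * ((y + h)^2 - y^2)) mod q"
    by (metis 2 mod_mult_right_eq)
  also have "m * ((y + h)^2 - y^2) = m * h^2 + 2*m*h*y" by (simp add: power2_eq_square algebra_simps)
  finally have "(m * (((y + h) mod q)^2 - y^2)) mod q = (m * h^2 + 2*m*h*y) mod q" .
  hence "e (of_int (m * (((y + h) mod q)^2 - y^2)) / of_int q) = e (of_int (m * h^2 + 2*m*h*y) / of_int q)"
    using assms by (intro e_cong) auto
  also have "of_int (m * h^2 + 2*m*h*y) / of_int q = of_int (m * h^2) / of_int q + (of_int (2*m*h*y) / of_int q :: real)"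
    by (simp add: add_divide_distrib)
  finally show ?thesis by (simp add: e_add)
qed

theorem lemma3p4:
  fixes q m :: int
  assumes "q > 0" and "24 dvd q" and "\<not> q dvd 24 * m"
  shows "norm (fhat q (fq q) (- m)) \<le> 1 / sqrt 5"
proof -
  have qpos: "q > 0" by fact
  define A where "A = (\<lambda>x. of_int (m * x^2) / (of_int q :: real))"
  define S where "S = (\<Sum>x\<in>{0..<q}. e (A x))"
  have step1: "fhat q (fq q) (-m) = S / of_int q"
  proof -
    have "(\<Sum>t\<in>{0..<q}. fq q t * e (- of_int (-m) * of_int t / of_int q))
        = (\<Sum>t\<in>{0..<q}. \<Sum>x\<in>{x\<in>{0..<q}. x^2 mod q = t}. e (of_int (m * (x^2 mod q)) / of_int q))"
    proof (rule sum.cong)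
      fix t assume t: "t \<in> {0..<q}"
      hence tm: "t mod q = t" by simp
      have "(\<Sum>x\<in>{x\<in>{0..<q}. x^2 mod q = t}. e (of_int (m * (x^2 mod q)) / of_int q))
          = (\<Sum>x\<in>{x\<in>{0..<q}. x^2 mod q = t}. e (- of_int (-m) * of_int t / of_int q))"
        by (rule sum.cong) auto
      also have "\<dots> = fq q t * e (- of_int (-m) * of_int t / of_int q)"
        unfolding fq_def tm by simp
      finally show "fq q t * e (- of_int (-m) * of_int t / of_int q) =
          (\<Sum>x\<in>{x\<in>{0..<q}. x^2 mod q = t}. e (of_int (m * (x^2 mod q)) / of_int q))" by metis
    qed simp
    also have "\<dots> = (\<Sum>x\<in>{0..<q}. e (of_int (m * (x^2 mod q)) / of_int q))"
      using qpos by (intro sum.group) auto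
    also have "\<dots> = S" unfolding S_def A_def
    proof (rule sum.cong)
      fix x
      show "e (of_int (m * (x^2 mod q)) / of_int q) = e (of_int (m * x^2) / of_int q)"
        using qpos by (intro e_cong) (auto simp: mod_mult_right_eq)
    qed simp
    finally show ?thesis unfolding fhat_def by simp
  qed
  define T where "T = (\<lambda>h. \<Sum>y\<in>{0..<q}. e (of_int (2*m*h*y) / of_int q))"
  have step2: "complex_of_real ((norm S)^2) = (\<Sum>h\<in>{0..<q}. e (of_int (m * h^2) / of_int q) * T h)"
  proof -
    have cS: "cnj S = (\<Sum>y\<in>{0..<q}. e (- A y))" unfolding S_def by (simp add: e_cnj)
    have "complex_of_real ((norm S)^2) = S * cnj S" by (rule complex_norm_square)
    also have "\<dots> = (\<Sum>x\<in>{0..<q}. \<Sum>y\<in>{0..<q}. e (A x) * e (- A y))"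
      by (subst cS) (simp add: S_def sum_product)
    also have "\<dots> = (\<Sum>y\<in>{0..<q}. \<Sum>x\<in>{0..<q}. e (A x) * e (- A y))" by (rule sum.swap)
    also have "\<dots> = (\<Sum>y\<in>{0..<q}. \<Sum>h\<in>{0..<q}. e (of_int (m * h^2) / of_int q) * e (of_int (2*m*h*y) / of_int q))"
    proof (rule sum.cong)
      fix y assume "y \<in> {0..<q}"
      have "(\<Sum>x\<in>{0..<q}. e (A x) * e (- A y)) = (\<Sum>x\<in>{0..<q}. e (of_int (m * (x^2 - y^2)) / of_int q))"
        by (rule sum.cong) (simp_all add: A_def e_add[symmetric] diff_divide_distrib right_diff_distrib)
      also have "\<dots> = (\<Sum>h\<in>{0..<q}. e (of_int (m * (((y + h) mod q)^2 - y^2)) / of_int q))"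
        by (rule sum.reindex_bij_betw[symmetric, OF shift_bij[OF qpos], of "\<lambda>x. e (of_int (m * (x^2 - y^2)) / of_int q)"])
      also have "\<dots> = (\<Sum>h\<in>{0..<q}. e (of_int (m * h^2) / of_int q) * e (of_int (2*m*h*y) / of_int q))"
        by (rule sum.cong[OF refl], rule shift_term[OF qpos])
      finally show "(\<Sum>x\<in>{0..<q}. e (A x) * e (- A y)) = \<dots>" .
    qed simp
    also have "\<dots> = (\<Sum>h\<in>{0..<q}. e (of_int (m * h^2) / of_int q) * T h)"
      unfolding T_def by (subst sum.swap) (simp add: sum_distrib_left)
    finally show ?thesis .
  qed
  define D where "D = {h\<in>{0..<q}. q dvd 2*m*h}"
  have Tbound: "norm (T h) \<le> (if q dvd 2*m*h then of_int q else 0)" for h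
  proof (cases "q dvd 2*m*h")
    case True
    have "norm (T h) \<le> (\<Sum>y\<in>{0..<q}. norm (e (of_int (2*m*h*y) / of_int q)))"
      unfolding T_def by (rule norm_sum)
    also have "\<dots> = of_int q" using qpos by (simp add: e_norm)
    finally show ?thesis using True by simp
  next
    case False
    have "T h = 0" unfolding T_def using geom_zero[OF qpos False] by simp
    thus ?thesis using False by simp
  qed
  have step3: "(norm S)^2 \<le> of_int q * of_nat (card D)"
  proof -
    have "(norm S)^2 = norm (complex_of_real ((norm S)^2))" by (simp only: norm_of_real) simp
    also have "\<dots> \<le> (\<Sum>h\<in>{0..<q}. norm (e (of_int (m * h^2) / of_int q) * T h))"
      unfolding step2 by (rule norm_sum)
    also have "\<dots> = (\<Sum>h\<in>{0..<q}. norm (T h))" by (simp add: norm_mult e_norm)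
    also have "\<dots> \<le> (\<Sum>h\<in>{0..<q}. if q dvd 2*m*h then of_int q else 0)"
      by (rule sum_mono) (rule Tbound)
    also have "\<dots> = (\<Sum>h\<in>D. of_int q)" unfolding D_def by (rule sum.inter_filter[symmetric]) simp
    also have "\<dots> = of_int q * of_nat (card D)" by simp
    finally show ?thesis .
  qed
  have cD: "card D \<le> nat (gcd (2*m) q)" unfolding D_def using card_D[OF qpos] .
  have g5: "5 * gcd (2*m) q \<le> q" using five_g[OF qpos assms(3)] .
  have "(norm S)^2 \<le> of_int q * of_int (gcd (2*m) q)"
  proof -
    have "int (card D) \<le> gcd (2*m) q" using cD by (simp add: le_nat_iff)
    hence "real (card D) \<le> of_int (gcd (2*m) q)"
      by (metis of_int_le_iff of_int_of_nat_eq)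
    thus ?thesis using step3 qpos by (smt (verit) mult_left_mono of_int_pos)
  qed
  also have "\<dots> \<le> of_int q * (of_int q / 5)"
    using g5 qpos by (intro mult_left_mono) auto
  finally have nS: "(norm S)^2 \<le> (of_int q)^2 / 5" by (simp add: power2_eq_square)
  have "(norm S / of_int q)^2 \<le> 1 / 5"
    using nS qpos by (simp add: power_divide divide_le_eq field_simps)
  hence "norm S / of_int q \<le> sqrt (1/5)" by (rule real_le_rsqrt)
  moreover have "norm (fhat q (fq q) (- m)) = norm S / of_int q"
    unfolding step1 using qpos by (simp add: norm_divide)
  ultimately show ?thesis by (simp add: real_sqrt_divide)
qed

end
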